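(* Let $T(z)=\sum_{n\ge1} n^{n-1}\frac{z^n}{n!}$, $T_0(z)=\frac{1}{1-T(z)}$ and $T_2(z)=\sum_{n\ge1} n^{n-2}\frac{z^n}{n!}$. Define polynomials $F_n,G_n,H_n$ ($n\ge1$) by $F_1(x)=G_1(x)=H_1(x)=1$ and \[F_{n+1}(x)=(2n+2+(n+2)x)F_n(x)+(1+x)^2F_n'(x),\] \[G_{n+1}(x)=(2n+nx)G_n(x)+(1+x)^2G_n'(x),\] \[H_{n+1}(x)=(2n-1+(n-1)x)H_n(x)+(1+x)^2H_n'(x).\] Then for every $n\ge1$, \[\frac{d^n}{dz^n}T_0(z)=\frac{e^{nT(z)}}{(1-T(z))^{n+2}}F_n\!\left(\frac{T(z)}{1-T(z)}\right),\qquad \frac{d^n}{dz^n}T(z)=\frac{e^{nT(z)}}{(1-T(z))^{n}}G_n\!\left(\frac{T(z)}{1-T(z)}\right),\] \[\frac{d^n}{dz^n}T_2(z)=\frac{e^{nT(z)}}{(1-T(z))^{n-1}}H_n\!\left(\frac{T(z)}{1-T(z)}\right).\]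
   Context: $T(z)$ is the tree function (exponential generating function of rooted labeled trees), analytic for $|z|<1/e$ and satisfying $T(z)=ze^{T(z)}$; equivalently $T(z)=-W(-z)$ where $W$ is the principal branch of Lambert's W function. The identities may be read as identities of analytic functions near $0$ or of formal power series in $z$. *)

theory Defs
  imports "HOL-Computational_Algebra.Computational_Algebra"
begin

definition treeT :: "real fps" where
  "treeT = Abs_fps (\<lambda>n. if n = 0 then 0 else of_nat n ^ (n - 1) / fact n)"

definition treeT0 :: "real fps" where
  "treeT0 = inverse (1 - treeT)"

text \<open>T_2(z) = sum_{n>=1} n^(n-2) z^n/n! (for n = 1 the coefficient is 1^(-1) = 1).\<close>
definition treeT2 :: "real fps" where
  "treeT2 = Abs_fps (\<lambda>n. if n = 0 then 0 else if n = 1 then 1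
                          else of_nat n ^ (n - 2) / fact n)"

text \<open>Polynomials F_n, G_n, H_n for n >= 1 (the value at index 0 is irrelevant).\<close>
fun Fpoly :: "nat \<Rightarrow> real poly" where
  "Fpoly 0 = 0"
| "Fpoly (Suc 0) = 1"
| "Fpoly (Suc (Suc n)) =
     [:2 * of_nat (Suc n) + 2, of_nat (Suc n) + 2:] * Fpoly (Suc n)
     + [:1, 1:] ^ 2 * pderiv (Fpoly (Suc n))"

fun Gpoly :: "nat \<Rightarrow> real poly" where
  "Gpoly 0 = 0"
| "Gpoly (Suc 0) = 1"
| "Gpoly (Suc (Suc n)) =
     [:2 * of_nat (Suc n), of_nat (Suc n):] * Gpoly (Suc n)
     + [:1, 1:] ^ 2 * pderiv (Gpoly (Suc n))"

fun Hpoly :: "nat \<Rightarrow> real poly" where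
  "Hpoly 0 = 0"
| "Hpoly (Suc 0) = 1"
| "Hpoly (Suc (Suc n)) =
     [:2 * of_nat (Suc n) - 1, of_nat (Suc n) - 1:] * Hpoly (Suc n)
     + [:1, 1:] ^ 2 * pderiv (Hpoly (Suc n))"

definition poly_fps :: "real poly \<Rightarrow> real fps \<Rightarrow> real fps" where
  "poly_fps p f = poly (map_poly fps_const p) f"

end

theory Submission imports Defs begin


definition fU :: "real fps" where "fU = fps_inv (fps_X * fps_exp (-1))"
definition gU :: "real \<Rightarrow> real fps" where "gU a = fps_exp a oo fU"

lemma fU0: "fU $ 0 = 0" by (simp add: fU_def fps_inv_def)

lemma gU_add: "gU a * gU b = gU (a+b)"
  unfolding gU_def by (simp add: fps_exp_add_mult fps_compose_mult_distrib[OF fU0])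

lemma gU_0: "gU 0 = 1" unfolding gU_def by simp

lemma fU_eq: "fU = fps_X * gU 1"
proof -
  have "(fps_X * fps_exp (-1)) oo fU = fps_X"
    unfolding fU_def by (rule fps_inv_right) simp_all
  hence "fU * gU (-1) = fps_X"
    by (simp add: fps_compose_mult_distrib[OF fU0] fU0 gU_def)
  hence "fU * gU (-1) * gU 1 = fps_X * gU 1" by simp
  thus ?thesis by (simp add: mult.assoc gU_add gU_0)
qed

lemma gU_deriv: "fps_deriv (gU a) = fps_const a * gU a * fps_deriv fU"
  unfolding gU_def by (simp add: fps_compose_deriv[OF fU0] fps_compose_mult_distrib[OF fU0])

lemma fU_deriv: "fps_deriv fU = gU 1 * (1 + fps_X * fps_deriv fU)"
proof -
  have "fps_deriv fU = fps_deriv (fps_X * gU 1)" using fU_eq by simp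
  also have "\<dots> = gU 1 + fps_X * (gU 1 * fps_deriv fU)" by (simp add: gU_deriv)
  finally show ?thesis by (simp add: algebra_simps)
qed

lemma gU_rec: "fps_const (a+1) * fps_deriv (gU a) =
   fps_const a * (fps_X * fps_deriv (gU (a+1))) + fps_const (a*(a+1)) * gU (a+1)"
proof -
  have h1: "gU (a+1) = gU a * gU 1" by (simp add: gU_add)
  have "fps_const a * (fps_X * fps_deriv (gU (a+1))) + fps_const (a*(a+1)) * gU (a+1)
     = fps_const a * fps_const (a+1) * gU a * (gU 1 * (1 + fps_X * fps_deriv fU))"
  proof -
    have d: "fps_deriv (gU (a+1)) = fps_const (a+1) * gU a * gU 1 * fps_deriv fU"
      by (simp add: gU_deriv h1[symmetric])
    show ?thesis unfolding d unfolding h1 by (simp add: algebra_simps fps_const_mult[symmetric])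
  qed
  also have "\<dots> = fps_const a * fps_const (a+1) * gU a * fps_deriv fU"
    by (simp only: fU_deriv[symmetric])
  also have "\<dots> = fps_const (a+1) * fps_deriv (gU a)"
    by (simp add: gU_deriv algebra_simps)
  finally show ?thesis by simp
qed

lemma gU_coeff: "a \<ge> 0 \<Longrightarrow> gU a $ Suc n = a * (a + of_nat (Suc n)) ^ n / fact (Suc n)"
proof (induction n arbitrary: a)
  case 0
  have "(fps_const (a+1) * fps_deriv (gU a)) $ 0 =
     (fps_const a * (fps_X * fps_deriv (gU (a+1))) + fps_const (a*(a+1)) * gU (a+1)) $ 0"
    by (simp only: gU_rec)
  hence "(a+1) * gU a $ 1 = a*(a+1)" by (simp add: gU_def)
  moreover have "a + 1 \<noteq> 0" using 0 by simp
  ultimately show ?case by simp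
next
  case (Suc m)
  have IH: "gU (a+1) $ Suc m = (a+1) * (a + 1 + of_nat (Suc m)) ^ m / fact (Suc m)"
    using Suc.IH[of "a+1"] Suc.prems by simp
  have "(fps_const (a+1) * fps_deriv (gU a)) $ Suc m =
     (fps_const a * (fps_X * fps_deriv (gU (a+1))) + fps_const (a*(a+1)) * gU (a+1)) $ Suc m"
    by (simp only: gU_rec)
  hence eq: "(a+1) * (of_nat m + 2) * gU a $ Suc (Suc m) =
       a * (of_nat m + 1) * gU (a+1) $ Suc m + a*(a+1) * gU (a+1) $ Suc m"
    by (simp add: fps_deriv_nth algebra_simps)
  also have "\<dots> = a * (a + of_nat m + 2) * gU (a+1) $ Suc m"
    by (simp add: algebra_simps)
  also have "\<dots> = a * (a+1) * (a + of_nat m + 2) ^ Suc m / fact (Suc m)"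
    unfolding IH by (simp add: algebra_simps)
  finally have "(a+1) * (of_nat m + 2) * gU a $ Suc (Suc m) = a * (a+1) * (a + of_nat m + 2) ^ Suc m / fact (Suc m)" .
  moreover have "a + 1 \<noteq> 0" using Suc.prems by simp
  ultimately have "(of_nat m + 2) * gU a $ Suc (Suc m) = a * (a + of_nat m + 2) ^ Suc m / fact (Suc m)"
  proof -
    assume h: "(a+1) * (of_nat m + 2) * gU a $ Suc (Suc m) = a * (a+1) * (a + of_nat m + 2) ^ Suc m / fact (Suc m)"
      and nz: "a + 1 \<noteq> 0"
    have "(a+1) * ((of_nat m + 2) * gU a $ Suc (Suc m)) = (a+1) * (a * (a + of_nat m + 2) ^ Suc m / fact (Suc m))"
      using h by (simp only: mult.assoc mult.left_commute[of a] times_divide_eq_right)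
    thus ?thesis using nz by (meson mult_left_cancel)
  qed
  hence g: "gU a $ Suc (Suc m) = (a * (a + of_nat m + 2) ^ Suc m / fact (Suc m)) / (of_nat m + 2)"
    by (simp add: eq_divide_eq ac_simps)
  have f: "fact (Suc (Suc m)) = (of_nat m + 2) * (fact (Suc m)::real)"
    by (simp add: fact_Suc[of "Suc m"] algebra_simps)
  have e: "a + of_nat (Suc (Suc m)) = a + of_nat m + 2" by simp
  show ?case unfolding g f e by (simp add: divide_divide_eq_left mult.commute)
qed

lemma gU_coeff0: "gU a $ 0 = 1" by (simp add: gU_def)

lemma fU_treeT: "fU = treeT"
proof (rule fps_ext)
  fix n show "fU $ n = treeT $ n"
  proof (cases n)
    case 0 thus ?thesis by (simp add: fU0 treeT_def)
  next
    case (Suc k)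
    hence "fU $ n = gU 1 $ k" by (simp add: fU_eq)
    show ?thesis
    proof (cases k)
      case 0 thus ?thesis using \<open>fU $ n = gU 1 $ k\<close> Suc by (simp add: gU_coeff0 treeT_def)
    next
      case (Suc m)
      have "gU 1 $ k = (of_nat m + 2) ^ m / fact (Suc m)"
        using gU_coeff[of 1 m] Suc by (simp add: algebra_simps)
      moreover have "treeT $ n = (of_nat m + 2) ^ Suc m / ((of_nat m + 2) * fact (Suc m))"
        using Suc \<open>n = Suc k\<close> by (simp add: treeT_def algebra_simps)
      ultimately show ?thesis using \<open>fU $ n = gU 1 $ k\<close> by simp
    qed
  qed
qed




lemma pf_0[simp]: "poly_fps 0 W = 0" by (simp add: poly_fps_def)
lemma pf_pCons[simp]: "poly_fps (pCons a p) W = fps_const a + W * poly_fps p W"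
  by (simp add: poly_fps_def map_poly_pCons)
lemma pf_1[simp]: "poly_fps 1 W = 1"
  by (simp add: one_pCons)

lemma pf_add[simp]: "poly_fps (p + q) W = poly_fps p W + poly_fps q W"
proof (induction p arbitrary: q)
  case (pCons a p)
  obtain b q' where "q = pCons b q'" by (cases q) auto
  then show ?case by (simp add: pCons.IH algebra_simps)
qed simp

lemma pf_smult[simp]: "poly_fps (smult c p) W = fps_const c * poly_fps p W"
  by (induction p) (simp_all add: algebra_simps)

lemma pf_mult[simp]: "poly_fps (p * q) W = poly_fps p W * poly_fps q W"
  by (induction p) (simp_all add: algebra_simps)

lemma pf_power[simp]: "poly_fps (p ^ k) W = poly_fps p W ^ k"
  by (induction k) simp_all

lemma pf_deriv: "fps_deriv (poly_fps p W) = poly_fps (pderiv p) W * fps_deriv W"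
  by (induction p) (simp_all add: pderiv_pCons algebra_simps)

definition "E a = fps_exp a oo treeT"

lemma T0: "treeT $ 0 = 0" by (simp add: treeT_def)
lemma E_gU: "E a = gU a" by (simp add: E_def gU_def fU_treeT)
lemma E_add: "E a * E b = E (a+b)" by (simp add: E_gU gU_add)
lemma T_eq: "treeT = fps_X * E 1" by (simp add: E_gU fU_eq[symmetric] fU_treeT)
lemma E_deriv: "fps_deriv (E a) = fps_const a * E a * fps_deriv treeT"
  by (simp add: E_gU gU_deriv fU_treeT)

definition "Iv = inverse (1 - treeT)"
definition "Wv = treeT * Iv"

lemma D0: "(1 - treeT) $ 0 = 1" by (simp add: T0)
lemma Iv_mult: "Iv * (1 - treeT) = 1"
  unfolding Iv_def by (rule inverse_mult_eq_1) (simp add: T0)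

lemma Td: "fps_deriv treeT = E 1 * Iv"
proof -
  have "fps_deriv treeT = fps_deriv (fps_X * E 1)" using T_eq by (rule arg_cong)
  also have "\<dots> = E 1 + fps_X * (E 1 * fps_deriv treeT)" by (simp add: E_deriv)
  also have "\<dots> = E 1 + treeT * fps_deriv treeT" by (metis T_eq mult.assoc)
  finally have "fps_deriv treeT = E 1 + treeT * fps_deriv treeT" .
  hence "fps_deriv treeT * (1 - treeT) = E 1" by (simp add: algebra_simps)
  hence "fps_deriv treeT * (1 - treeT) * Iv = E 1 * Iv" by simp
  thus ?thesis using Iv_mult by (simp add: mult.assoc mult.commute[of "1 - treeT"])
qed

lemma Ivd: "fps_deriv Iv = E 1 * Iv ^ 3"
proof -
  have "fps_deriv Iv = fps_deriv treeT * Iv^2"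
    unfolding Iv_def by (simp add: fps_inverse_deriv T0)
  thus ?thesis by (simp add: Td power2_eq_square power3_eq_cube mult.assoc)
qed

lemma W1: "1 + Wv = Iv"
proof -
  have "Iv = Iv * (1 - treeT) + Wv" by (simp add: Wv_def algebra_simps)
  thus ?thesis using Iv_mult by simp
qed

lemma Wd: "fps_deriv Wv = E 1 * Iv ^ 3"
proof -
  have "fps_deriv Wv = E 1 * Iv * Iv * (1 + Wv)"
    by (simp add: Wv_def Td Ivd algebra_simps power3_eq_cube)
  thus ?thesis by (simp add: W1 power3_eq_cube)
qed

lemma Ivpd: "fps_deriv (Iv ^ m) = fps_const (of_nat m) * E 1 * Iv ^ m * Iv^2"
proof (induction m)
  case (Suc m)
  have "fps_deriv (Iv ^ Suc m) = fps_deriv Iv * Iv ^ m + Iv * fps_deriv (Iv ^ m)"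
    by simp
  also have "\<dots> = (1 + fps_const (of_nat m)) * E 1 * (Iv * Iv ^ m) * Iv^2"
    unfolding Suc.IH Ivd by (simp add: algebra_simps power3_eq_cube power2_eq_square)
  finally have h: "fps_deriv (Iv ^ Suc m) = (1 + fps_const (of_nat m)) * E 1 * (Iv * Iv ^ m) * Iv^2" .
  have eq: "fps_const (of_nat (Suc m)) = 1 + fps_const (of_nat m :: real)"
    by (metis fps_const_add fps_const_1_eq_1 of_nat_Suc add.commute)
  show ?case unfolding eq using h by (simp only: power_Suc)
qed simp

lemma key:
  "fps_deriv (E a * Iv ^ m * poly_fps P Wv) =
     E (a+1) * Iv ^ (m+1) * poly_fps ([:a + of_nat m, of_nat m:] * P + [:1,1:]^2 * pderiv P) Wv"
proof -
  have Wi: "Wv = Iv - 1" using W1 by (simp add: algebra_simps)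
  define J where "J = Iv ^ m"
  define Q where "Q = poly_fps P Wv"
  define Q' where "Q' = poly_fps (pderiv P) Wv"
  have lhs: "fps_deriv (E a * J * Q) =
      fps_const a * E a * E 1 * Iv * J * Q
      + E a * (fps_const (of_nat m) * E 1 * J * Iv^2) * Q
      + E a * J * (Q' * (E 1 * Iv ^ 3))"
    unfolding J_def Q_def Q'_def by (simp add: E_deriv Td Ivpd pf_deriv Wd distrib_right distrib_left mult.assoc mult.commute mult.left_commute)
  have c: "poly_fps [:a + of_nat m, of_nat m:] Wv = fps_const a + fps_const (of_nat m) * Iv"
    by (simp add: Wi fps_const_add[symmetric] algebra_simps del: fps_const_add)
  have p2: "poly_fps ([:1,1:]^2) Wv = Iv ^ 2"
    by (simp add: W1[symmetric] add.commute)
  have r: "fps_deriv (E a * J * Q) = E a * E 1 * (J * Iv) *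
     ((fps_const a + fps_const (of_nat m) * Iv) * Q + Iv^2 * Q')"
    unfolding lhs by (simp add: algebra_simps power2_eq_square power3_eq_cube)
  have e1: "E (a+1) = E a * E 1" by (simp add: E_add)
  show ?thesis
    unfolding r[unfolded J_def Q_def Q'_def] pf_add pf_mult c p2 e1 power_add power_one_right
    by (rule refl)
qed


lemma div_pow: "f / (1 - treeT) ^ k = f * Iv ^ k"
proof -
  have "((1 - treeT) ^ k) $ 0 = 1" by (induction k) (simp_all add: T0)
  hence "f / (1 - treeT) ^ k = f * inverse ((1 - treeT) ^ k)" by (simp add: fps_divide_unit)
  thus ?thesis by (simp add: fps_inverse_power Iv_def)
qed

lemma W_eq: "treeT / (1 - treeT) = Wv"
  using div_pow[of treeT 1] by (simp add: Wv_def)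

lemma T2d: "fps_deriv treeT2 = E 1"
proof (rule fps_ext)
  fix n
  show "fps_deriv treeT2 $ n = E 1 $ n"
  proof (cases n)
    case 0 thus ?thesis by (simp add: E_gU gU_coeff0 treeT2_def fps_deriv_nth)
  next
    case (Suc m)
    have "E 1 $ n = (of_nat m + 2) ^ m / fact (Suc m)"
      using gU_coeff[of 1 m] Suc by (simp add: E_gU algebra_simps)
    moreover have "fps_deriv treeT2 $ n = (of_nat m + 2) * ((of_nat m + 2) ^ m / ((of_nat m + 2) * fact (Suc m)))"
      using Suc by (simp add: treeT2_def fps_deriv_nth algebra_simps)
    moreover have "(of_nat m + 2::real) \<noteq> 0" by simp
    ultimately show ?thesis by simp
  qed
qed

lemma Fmain: "(fps_deriv ^^ Suc k) treeT0 = E (of_nat (Suc k)) * Iv ^ (Suc k + 2) * poly_fps (Fpoly (Suc k)) Wv"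
proof (induction k)
  case 0
  show ?case by (simp add: treeT0_def Iv_def[symmetric] Ivd power3_eq_cube)
next
  case (Suc k)
  have co: "[:of_nat (Suc k) + of_nat (Suc k + 2), of_nat (Suc k + 2):] =
            [:2 * of_nat (Suc k) + 2, of_nat (Suc k) + 2 :: real:]" by simp
  have "(fps_deriv ^^ Suc (Suc k)) treeT0 = fps_deriv ((fps_deriv ^^ Suc k) treeT0)" by simp
  also have "\<dots> = E (of_nat (Suc k) + 1) * Iv ^ (Suc k + 2 + 1) * poly_fps (Fpoly (Suc (Suc k))) Wv"
    unfolding Suc.IH key co by simp
  finally show ?case by (simp add: add_ac)
qed

lemma Gmain: "(fps_deriv ^^ Suc k) treeT = E (of_nat (Suc k)) * Iv ^ (Suc k) * poly_fps (Gpoly (Suc k)) Wv"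
proof (induction k)
  case 0
  show ?case by (simp add: Td)
next
  case (Suc k)
  have co: "[:of_nat (Suc k) + of_nat (Suc k), of_nat (Suc k):] =
            [:2 * of_nat (Suc k), of_nat (Suc k) :: real:]" by simp
  have "(fps_deriv ^^ Suc (Suc k)) treeT = fps_deriv ((fps_deriv ^^ Suc k) treeT)" by simp
  also have "\<dots> = E (of_nat (Suc k) + 1) * Iv ^ (Suc k + 1) * poly_fps (Gpoly (Suc (Suc k))) Wv"
    unfolding Suc.IH key co by simp
  finally show ?case by (simp add: add_ac)
qed

lemma Hmain: "(fps_deriv ^^ Suc k) treeT2 = E (of_nat (Suc k)) * Iv ^ k * poly_fps (Hpoly (Suc k)) Wv"
proof (induction k)
  case 0
  show ?case by (simp add: T2d)
next
  case (Suc k)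
  have co: "[:of_nat (Suc k) + of_nat k, of_nat k:] =
            [:2 * of_nat (Suc k) - 1, of_nat (Suc k) - 1 :: real:]" by simp
  have "(fps_deriv ^^ Suc (Suc k)) treeT2 = fps_deriv ((fps_deriv ^^ Suc k) treeT2)" by simp
  also have "\<dots> = E (of_nat (Suc k) + 1) * Iv ^ (k + 1) * poly_fps (Hpoly (Suc (Suc k))) Wv"
    unfolding Suc.IH key co by simp
  finally show ?case by (simp add: add_ac)
qed

theorem mainTheorem1:
  fixes n :: nat
  assumes "n \<ge> 1"
  shows "(fps_deriv ^^ n) treeT0 =
           fps_compose (fps_exp (of_nat n)) treeT / (1 - treeT) ^ (n + 2)
           * poly_fps (Fpoly n) (treeT / (1 - treeT)) \<and>
         (fps_deriv ^^ n) treeT =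
           fps_compose (fps_exp (of_nat n)) treeT / (1 - treeT) ^ n
           * poly_fps (Gpoly n) (treeT / (1 - treeT)) \<and>
         (fps_deriv ^^ n) treeT2 =
           fps_compose (fps_exp (of_nat n)) treeT / (1 - treeT) ^ (n - 1)
           * poly_fps (Hpoly n) (treeT / (1 - treeT))"
proof -
  obtain k where n: "n = Suc k" using assms by (cases n) auto
  show ?thesis
    unfolding n div_pow W_eq E_def[symmetric] Fmain Gmain Hmain by simp
qed

end
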